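(* Under the Standing Setup and Assumption (G) described in the context, $$\mathcal{E}(PC_{f,\mathcal{T}})\ \ge\ \max_{\alpha\in V_k}\big[\mathcal{E}(f\oplus\varphi_\alpha)\big]^{2^s},$$ where $V_k\subseteq\mathbf{F}_2^n$ is the subspace spanned by the first $k$ standard basis vectors.
   Context: Standing Setup. $f:\mathbf{F}_2^n\to\mathbf{F}_2$ is a Boolean function. $\mathbf{x}_1,\ldots,\mathbf{x}_n$ are binary sequences, $\mathbf{x}_j=(x_j(t))_{t\ge0}$, with $\mathbf{x}_j$ periodic of period $T_j$, i.e. $x_j(t)=x_j(t \bmod T_j)$. Let $s\ge1$ and integers $0=\ell_1<\ell_2<\cdots<\ell_{s+1}=k\le n$; variable $j$ belongs to block $i$ if $\ell_i<j\le\ell_{i+1}$. For $1\le i\le s$, $M_i=q_i\,\mathrm{lcm}(T_{\ell_i+1},\ldots,T_{\ell_{i+1}})$ with $q_i$ a positive integer. For $c=\sum_{i=1}^s c_i2^{i-1}\in\{0,\ldots,2^s-1\}$ with $c_i\in\{0,1\}$, put $\tau_c=\sum_{i=1}^s c_iM_i$, and $\mathcal{T}=\{\tau_c\}$. The parity-check sequence is $PC_{f,\mathcal{T}}(t)=\bigoplus_{c=0}^{2^s-1} f\big(x_1(t+\tau_c),\ldots,x_n(t+\tau_c)\big)$. The bias of a Boolean function $h$ of $m$ variables is $\mathcal{E}(h)=2^{-m}\sum_{x\in\mathbf{F}_2^m}(-1)^{h(x)}$. The bias $\mathcal{E}(PC_{f,\mathcal{T}})$ is the bias of $PC_{f,\mathcal{T}}(t)$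 (for a fixed $t\ge0$) viewed as a Boolean function of the $T_1+\cdots+T_n$ bits $x_j(0),\ldots,x_j(T_j-1)$, $1\le j\le n$; equivalently $\mathbb{E}[(-1)^{PC_{f,\mathcal{T}}(t)}]$ when these bits are independent and uniform. Assumption (G): (i) for every $j$ with $k<j\le n$, the $2^s$ integers $\tau_c$ are pairwise incongruent modulo $T_j$; (ii) for every $i\in\{1,\ldots,s\}$ and every $j$ in block $i$, the $2^{s-1}$ integers $\sum_{l\ne i}c_lM_l$ ($c_l\in\{0,1\}$) are pairwise incongruent modulo $T_j$. For $\alpha\in\mathbf{F}_2^n$, $\varphi_\alpha$ is the linear function $x\mapsto\alpha\cdot x=\bigoplus_{j}\alpha_jx_j$. *)

theory Defs
  imports Complex_Main "HOL-Library.FuncSet"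
begin

definition F2vec :: "nat \<Rightarrow> (nat \<Rightarrow> bool) set" where
  "F2vec n = Pi\<^sub>E {1..n} (\<lambda>_. UNIV)"

definition sgn1 :: "bool \<Rightarrow> real" where
  "sgn1 b = (if b then -1 else 1)"

definition bias :: "'a set \<Rightarrow> ('a \<Rightarrow> bool) \<Rightarrow> real" where
  "bias D h = (\<Sum>x\<in>D. sgn1 (h x)) / real (card D)"

definition xor_set :: "'a set \<Rightarrow> ('a \<Rightarrow> bool) \<Rightarrow> bool" where
  "xor_set A P = odd (card {a\<in>A. P a})"

definition lin_fun :: "nat \<Rightarrow> (nat \<Rightarrow> bool) \<Rightarrow> (nat \<Rightarrow> bool) \<Rightarrow> bool" where
  "lin_fun n \<alpha> x = xor_set {1..n} (\<lambda>j. \<alpha> j \<and> x j)"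

definition Vk :: "nat \<Rightarrow> nat \<Rightarrow> (nat \<Rightarrow> bool) set" where
  "Vk n k = {\<alpha>\<in>F2vec n. \<forall>j\<in>{k<..n}. \<not> \<alpha> j}"

definition Mblk :: "(nat \<Rightarrow> nat) \<Rightarrow> (nat \<Rightarrow> nat) \<Rightarrow> (nat \<Rightarrow> nat) \<Rightarrow> nat \<Rightarrow> nat" where
  "Mblk q l T i = q i * Lcm (T ` {l i + 1 .. l (Suc i)})"

text \<open>tau_c = sum_i c_i M_i where c = sum_i c_i 2^(i-1).\<close>
definition tau :: "nat \<Rightarrow> (nat \<Rightarrow> nat) \<Rightarrow> nat \<Rightarrow> nat" where
  "tau s M c = (\<Sum>i=1..s. (if bit c (i - 1) then M i else 0))"

definition Bits :: "nat \<Rightarrow> (nat \<Rightarrow> nat) \<Rightarrow> (nat \<Rightarrow> nat \<Rightarrow> bool) set" where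
  "Bits n T = Pi\<^sub>E {1..n} (\<lambda>j. Pi\<^sub>E {0..<T j} (\<lambda>_. UNIV))"

text \<open>Parity-check sequence at time t, given initial bits y (x_j(t) = y j (t mod T_j)).\<close>
definition PC :: "nat \<Rightarrow> ((nat \<Rightarrow> bool) \<Rightarrow> bool) \<Rightarrow> (nat \<Rightarrow> nat) \<Rightarrow> nat \<Rightarrow> (nat \<Rightarrow> nat)
                   \<Rightarrow> nat \<Rightarrow> (nat \<Rightarrow> nat \<Rightarrow> bool) \<Rightarrow> bool" where
  "PC n f T s M t y = xor_set {0..<2^s}
      (\<lambda>c. f (restrict (\<lambda>j. y j ((t + tau s M c) mod T j)) {1..n}))"

end

theory Submission
  imports Defs "HOL-Number_Theory.Cong"
begin


definition avg :: "'a set \<Rightarrow> (('a \<Rightarrow> bool) \<Rightarrow> real) \<Rightarrow> real" where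
  "avg P h = (\<Sum>Y\<in>PiE P (\<lambda>_. UNIV). h Y) / 2 ^ card P"

definition mrg :: "'a set \<Rightarrow> ('a \<Rightarrow> bool) \<Rightarrow> ('a \<Rightarrow> bool) \<Rightarrow> 'a \<Rightarrow> bool" where
  "mrg I u v = (\<lambda>x. if x \<in> I then u x else v x)"

lemma card_PiE_bool: "finite P \<Longrightarrow> card (PiE P (\<lambda>_. UNIV::bool set)) = 2 ^ card P"
  by (simp add: card_PiE)

lemma avg_const: "finite P \<Longrightarrow> avg P (\<lambda>_. c) = c"
  unfolding avg_def by (simp add: card_PiE_bool)

lemma avg_cong: "(\<And>Y. Y \<in> PiE P (\<lambda>_. UNIV) \<Longrightarrow> h Y = h' Y) \<Longrightarrow> avg P h = avg P h'"
  unfolding avg_def by (metis (mono_tags, lifting) sum.cong)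

lemma avg_mult_left: "avg P (\<lambda>Y. c * h Y) = c * avg P h"
  unfolding avg_def by (simp add: sum_distrib_left)

lemma avg_mult_right: "avg P (\<lambda>Y. h Y * c) = avg P h * c"
  unfolding avg_def by (simp add: sum_distrib_right)

lemma mrg_bij:
  assumes "I \<inter> J = {}"
  shows "bij_betw (\<lambda>(u,v). mrg I u v) (PiE I (\<lambda>_. UNIV) \<times> PiE J (\<lambda>_. UNIV)) (PiE (I \<union> J) (\<lambda>_. UNIV))"
proof (rule bij_betw_byWitness[where f'="\<lambda>Y. (restrict Y I, restrict Y J)"])
  show "\<forall>a\<in>PiE I (\<lambda>_. UNIV) \<times> PiE J (\<lambda>_. UNIV). (\<lambda>Y. (restrict Y I, restrict Y J)) ((\<lambda>(u,v). mrg I u v) a) = a"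
    using assms by (auto simp: mrg_def PiE_def extensional_def fun_eq_iff)
  show "\<forall>a'\<in>PiE (I \<union> J) (\<lambda>_. UNIV). (\<lambda>(u,v). mrg I u v) ((\<lambda>Y. (restrict Y I, restrict Y J)) a') = a'"
    by (auto simp: mrg_def PiE_def extensional_def fun_eq_iff)
  show "(\<lambda>(u,v). mrg I u v) ` (PiE I (\<lambda>_. UNIV) \<times> PiE J (\<lambda>_. UNIV)) \<subseteq> PiE (I \<union> J) (\<lambda>_. UNIV)"
    by (auto simp: mrg_def PiE_def extensional_def)
  show "(\<lambda>Y. (restrict Y I, restrict Y J)) ` PiE (I \<union> J) (\<lambda>_. UNIV) \<subseteq> PiE I (\<lambda>_. UNIV) \<times> PiE J (\<lambda>_. UNIV)"
    by auto
qed

lemma avg_merge: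
  assumes "finite I" "finite J" "I \<inter> J = {}"
  shows "avg (I \<union> J) h = avg I (\<lambda>u. avg J (\<lambda>v. h (mrg I u v)))"
proof -
  have "(\<Sum>Y\<in>PiE (I \<union> J) (\<lambda>_. UNIV). h Y) = (\<Sum>x\<in>PiE I (\<lambda>_. UNIV) \<times> PiE J (\<lambda>_. UNIV). h ((\<lambda>(u,v). mrg I u v) x))"
    using sum.reindex_bij_betw[OF mrg_bij[OF assms(3)], of h] by simp
  also have "\<dots> = (\<Sum>u\<in>PiE I (\<lambda>_. UNIV). \<Sum>v\<in>PiE J (\<lambda>_. UNIV). h (mrg I u v))"
    by (subst sum.cartesian_product) (simp add: case_prod_beta)
  finally have e: "(\<Sum>Y\<in>PiE (I \<union> J) (\<lambda>_. UNIV). h Y) = (\<Sum>u\<in>PiE I (\<lambda>_. UNIV). \<Sum>v\<in>PiE J (\<lambda>_. UNIV). h (mrg I u v))" .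
  have c: "card (I \<union> J) = card I + card J" using assms card_Un_disjoint by blast
  show ?thesis unfolding avg_def e c
    by (simp add: sum_divide_distrib[symmetric] power_add field_simps)
qed

lemma avg_bij:
  assumes "bij_betw \<phi> (PiE I (\<lambda>_. UNIV)) (PiE J (\<lambda>_. UNIV))" "card I = card J"
  shows "avg I (\<lambda>Y. h (\<phi> Y)) = avg J h"
  unfolding avg_def using sum.reindex_bij_betw[OF assms(1), of h] assms(2) by simp

lemma avg_sq:
  assumes "finite P"
  shows "(avg P h)^2 \<le> avg P (\<lambda>Y. (h Y)^2)"
proof -
  let ?D = "PiE P (\<lambda>_. UNIV::bool set)"
  let ?N = "real (card ?D)"
  have N: "?N = 2 ^ card P" using card_PiE_bool[OF assms] by simp
  define m where "m = avg P h"
  have sh: "sum h ?D = ?N * m" unfolding m_def avg_def N by simp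
  have "0 \<le> (\<Sum>Y\<in>?D. (h Y - m)^2)" by (simp add: sum_nonneg)
  also have "\<dots> = (\<Sum>Y\<in>?D. (h Y)^2) - 2 * m * sum h ?D + ?N * m^2"
    by (simp add: power2_diff sum.distrib sum_subtractf sum_distrib_left[symmetric] sum_distrib_right[symmetric] algebra_simps)
  also have "\<dots> = (\<Sum>Y\<in>?D. (h Y)^2) - ?N * m^2" unfolding sh by (simp add: power2_eq_square)
  finally have "?N * m^2 \<le> (\<Sum>Y\<in>?D. (h Y)^2)" by simp
  hence "m^2 \<le> (\<Sum>Y\<in>?D. (h Y)^2) / ?N" using N by (simp add: field_simps)
  thus ?thesis unfolding m_def avg_def[of P "\<lambda>Y. (h Y)^2"] N .
qed

lemma perm_PiE_bij:
  assumes "bij_betw \<pi> Q Q"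
  shows "bij_betw (\<lambda>v. restrict (v \<circ> \<pi>) Q) (PiE Q (\<lambda>_. UNIV)) (PiE Q (\<lambda>_. UNIV))"
proof (rule bij_betw_byWitness[where f'="\<lambda>v. restrict (v \<circ> inv_into Q \<pi>) Q"])
  have i1: "\<And>x. x \<in> Q \<Longrightarrow> inv_into Q \<pi> (\<pi> x) = x" using assms by (simp add: bij_betw_def)
  have i2: "\<And>x. x \<in> Q \<Longrightarrow> \<pi> (inv_into Q \<pi> x) = x" using assms by (meson bij_betw_inv_into_right)
  have m1: "\<And>x. x \<in> Q \<Longrightarrow> \<pi> x \<in> Q" using assms bij_betwE by blast
  have m2: "\<And>x. x \<in> Q \<Longrightarrow> inv_into Q \<pi> x \<in> Q" using assms by (meson bij_betwE bij_betw_inv_into)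
  show "\<forall>a\<in>PiE Q (\<lambda>_. UNIV). restrict (restrict (a \<circ> \<pi>) Q \<circ> inv_into Q \<pi>) Q = a"
    using m2 i2 by (auto simp: fun_eq_iff PiE_def extensional_def)
  show "\<forall>a\<in>PiE Q (\<lambda>_. UNIV). restrict (restrict (a \<circ> inv_into Q \<pi>) Q \<circ> \<pi>) Q = a"
    using m1 i1 by (auto simp: fun_eq_iff PiE_def extensional_def)
qed auto



lemma key:
  fixes G1 G2 :: "('a \<Rightarrow> bool) \<Rightarrow> real"
  assumes fin: "finite P" and SP: "S \<subseteq> P" and AP: "A \<subseteq> P" and SA: "S \<inter> A = {}"
    and d1: "\<And>Y Y'. (\<forall>x\<in>S \<union> A. Y x = Y' x) \<Longrightarrow> G1 Y = G1 Y'"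
    and d2: "\<And>Y Y'. (\<forall>x\<in>P - A. Y x = Y' x) \<Longrightarrow> G2 Y = G2 Y'"
    and pb: "bij_betw \<pi> (P - S) (P - S)" and pS: "\<And>x. x \<in> S \<Longrightarrow> \<pi> x = x"
    and sym: "\<And>Y. G2 Y = G1 (Y \<circ> \<pi>)"
  shows "(avg P G1)^2 \<le> avg P (\<lambda>Y. G1 Y * G2 Y)"
proof -
  define Q where "Q = P - S"
  define C where "C = Q - A"
  have PQ: "P = S \<union> Q" "S \<inter> Q = {}" using SP unfolding Q_def by auto
  have QA: "Q = A \<union> C" "A \<inter> C = {}" using AP SA unfolding C_def Q_def by auto
  have finS: "finite S" "finite Q" "finite A" "finite C" using fin SP AP unfolding Q_def C_def
    by (auto intro: finite_subset)
  define w0 :: "'a \<Rightarrow> bool" where "w0 = (\<lambda>_. False)"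
  define \<alpha> where "\<alpha> u = avg Q (\<lambda>v. G1 (mrg S u v))" for u
  define \<beta> where "\<beta> u = avg Q (\<lambda>v. G2 (mrg S u v))" for u
  have g1: "G1 (mrg S u (mrg A a w)) = G1 (mrg S u (mrg A a w0))" for u a w
    by (rule d1) (auto simp: mrg_def)
  have g2: "G2 (mrg S u (mrg A a w)) = G2 (mrg S u (mrg A w0 w))" for u a w
    by (rule d2) (auto simp: mrg_def)
  have al: "\<alpha> u = avg A (\<lambda>a. G1 (mrg S u (mrg A a w0)))" for u
  proof -
    have "\<alpha> u = avg A (\<lambda>a. avg C (\<lambda>w. G1 (mrg S u (mrg A a w))))"
      unfolding \<alpha>_def QA(1) by (rule avg_merge[OF finS(3,4) QA(2)])
    also have "\<dots> = avg A (\<lambda>a. avg C (\<lambda>w. G1 (mrg S u (mrg A a w0))))"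
      by (rule avg_cong, rule avg_cong, rule g1)
    also have "\<dots> = avg A (\<lambda>a. G1 (mrg S u (mrg A a w0)))"
      by (simp only: avg_const[OF finS(4)])
    finally show ?thesis .
  qed
  have be: "\<beta> u = avg C (\<lambda>w. G2 (mrg S u (mrg A w0 w)))" for u
  proof -
    have "\<beta> u = avg A (\<lambda>a. avg C (\<lambda>w. G2 (mrg S u (mrg A a w))))"
      unfolding \<beta>_def QA(1) by (rule avg_merge[OF finS(3,4) QA(2)])
    also have "\<dots> = avg A (\<lambda>a. avg C (\<lambda>w. G2 (mrg S u (mrg A w0 w))))"
      by (rule avg_cong, rule avg_cong, rule g2)
    also have "\<dots> = avg C (\<lambda>w. G2 (mrg S u (mrg A w0 w)))"
      by (simp only: avg_const[OF finS(3)])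
    finally show ?thesis .
  qed
  have pr: "avg Q (\<lambda>v. G1 (mrg S u v) * G2 (mrg S u v)) = \<alpha> u * \<beta> u" for u
  proof -
    have "avg Q (\<lambda>v. G1 (mrg S u v) * G2 (mrg S u v)) =
       avg A (\<lambda>a. avg C (\<lambda>w. G1 (mrg S u (mrg A a w)) * G2 (mrg S u (mrg A a w))))"
      unfolding QA(1) by (rule avg_merge[OF finS(3,4) QA(2)])
    also have "\<dots> = avg A (\<lambda>a. avg C (\<lambda>w. G1 (mrg S u (mrg A a w0)) * G2 (mrg S u (mrg A w0 w))))"
      by (rule avg_cong, rule avg_cong, rule arg_cong2[where f="(*)"], rule g1, rule g2)
    also have "\<dots> = avg A (\<lambda>a. G1 (mrg S u (mrg A a w0)) * \<beta> u)"
      unfolding be by (simp only: avg_mult_left)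
    also have "\<dots> = \<alpha> u * \<beta> u" unfolding al by (rule avg_mult_right)
    finally show ?thesis .
  qed
  have ab: "\<beta> u = \<alpha> u" for u
  proof -
    have m1: "\<And>x. x \<in> Q \<Longrightarrow> \<pi> x \<in> Q" using pb bij_betwE unfolding Q_def by blast
    have "\<beta> u = avg Q (\<lambda>v. G1 (mrg S u (restrict (v \<circ> \<pi>) Q)))"
      unfolding \<beta>_def sym
    proof (rule avg_cong)
      fix Y :: "'a \<Rightarrow> bool"
      show "G1 (mrg S u Y \<circ> \<pi>) = G1 (mrg S u (restrict (Y \<circ> \<pi>) Q))"
        by (rule d1) (use pS m1 QA(1) PQ(2) in \<open>auto simp: mrg_def\<close>)
    qed
    also have "\<dots> = \<alpha> u" unfolding \<alpha>_def
      by (rule avg_bij[OF perm_PiE_bij[OF pb[folded Q_def]] refl])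
    finally show ?thesis .
  qed
  have "avg P (\<lambda>Y. G1 Y * G2 Y) = avg S (\<lambda>u. (\<alpha> u)^2)"
    unfolding PQ(1) by (simp only: avg_merge[OF finS(1,2) PQ(2)] pr ab power2_eq_square)
  moreover have "avg P G1 = avg S \<alpha>"
    unfolding PQ(1) \<alpha>_def by (rule avg_merge[OF finS(1,2) PQ(2)])
  ultimately show ?thesis using avg_sq[OF finS(1), of \<alpha>] by simp
qed



lemma nb: "(c::nat) < 2^s \<Longrightarrow> \<not> bit c s"
  by (simp add: bit_iff_odd)
lemma disj2: "(c::nat) < 2^s \<Longrightarrow> c + 2^s = or c (2^s)"
  apply (rule disjunctive_add)
  by (metis bit_exp_iff bit_iff_odd div_less even_zero)
lemma ule: "unset_bit i (c::nat) \<le> c"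
proof -
  have "int (unset_bit i c) = unset_bit i (int c)" by (rule of_nat_unset_bit_eq)
  also have "\<dots> \<le> int c" by (rule unset_bit_less_eq)
  finally show ?thesis by simp
qed
lemma ub2: "i \<noteq> s \<Longrightarrow> (c::nat) < 2^s \<Longrightarrow> unset_bit i (c + 2^s) = unset_bit i c + 2^s"
proof -
  assume a: "i \<noteq> s" "c < 2^s"
  have "unset_bit i c < 2^s" using ule[of i c] a by linarith
  hence "unset_bit i c + 2^s = or (unset_bit i c) (2^s)" by (rule disj2)
  thus ?thesis using a disj2[OF a(2)] by (auto simp: bit_eq_iff bit_or_iff bit_unset_bit_iff bit_exp_iff)
qed
lemma ub1: "(c::nat) < 2^s \<Longrightarrow> unset_bit s (c + 2^s) = c"
  apply (subst disj2, assumption)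
  apply (rule bit_eqI)
  using nb[of c s] by (auto simp: bit_or_iff bit_unset_bit_iff bit_exp_iff)

lemma prod_split: "(\<Prod>c<2^Suc s. f c) = (\<Prod>c<2^s. f c) * (\<Prod>c<2^s. f (c + 2^s)) " for f :: "nat \<Rightarrow> real"
proof -
  have "(\<Prod>c<2^Suc s. f c) = prod f ({..<2^s} \<union> {2^s..<2^s+2^s})" 
    by (rule prod.cong) auto
  also have "\<dots> = prod f {..<2^s} * prod f {0+2^s..<2^s+2^s}" by (subst prod.union_disjoint) auto
  also have "prod f {0+2^s..<2^s+2^s} = (\<Prod>c\<in>{0..<2^s}. f (c + 2^s))" by (rule prod.shift_bounds_nat_ivl)
  finally show ?thesis by (simp add: atLeast0LessThan)
qed

definition Pset :: "nat \<Rightarrow> (nat \<Rightarrow> nat) \<Rightarrow> (nat \<times> nat) set" where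
  "Pset n T = Sigma {1..n} (\<lambda>j. {0..<T j})"

definition Xv :: "nat \<Rightarrow> (nat \<Rightarrow> nat \<Rightarrow> nat) \<Rightarrow> nat \<Rightarrow> (nat \<times> nat \<Rightarrow> bool) \<Rightarrow> nat \<Rightarrow> bool" where
  "Xv n p c Y = restrict (\<lambda>j. Y (j, p c j)) {1..n}"

definition hyps :: "nat \<Rightarrow> (nat \<Rightarrow> nat) \<Rightarrow> (nat \<Rightarrow> nat \<Rightarrow> nat) \<Rightarrow> (nat \<Rightarrow> nat) \<Rightarrow> nat \<Rightarrow> bool" where
  "hyps n T p b s \<longleftrightarrow> (\<forall>c<2^s. \<forall>j\<in>{1..n}. p c j < T j) \<and>
    (\<forall>j\<in>{1..n}. b j \<le> s \<and> (b j = 0 \<longrightarrow> inj_on (\<lambda>c. p c j) {..<(2::nat)^s}) \<and>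
       (b j \<noteq> 0 \<longrightarrow> (\<forall>c<2^s. p (unset_bit (b j - 1) c) j = p c j) \<and>
           inj_on (\<lambda>c. p c j) {c. c < 2^s \<and> \<not> bit c (b j - 1)}))"

lemma finite_Pset: "finite (Pset n T)"
  unfolding Pset_def by auto

lemma base:
  assumes "\<forall>j\<in>{1..n}. p 0 j < T j"
  shows "avg (Pset n T) (\<lambda>Y. g (Xv n p 0 Y)) = avg {1..n} g"
proof -
  define S0 where "S0 = (\<lambda>j. (j, p 0 j)) ` {1..n}"
  have S0P: "S0 \<subseteq> Pset n T" using assms unfolding S0_def Pset_def by auto
  have fin: "finite S0" "finite (Pset n T - S0)" using finite_Pset S0P by (auto intro: finite_subset)
  have PU: "Pset n T = S0 \<union> (Pset n T - S0)" using S0P by auto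
  have "avg (Pset n T) (\<lambda>Y. g (Xv n p 0 Y)) = avg S0 (\<lambda>u. avg (Pset n T - S0) (\<lambda>v. g (Xv n p 0 (mrg S0 u v))))"
    by (subst PU, rule avg_merge[OF fin]) auto
  also have "\<dots> = avg S0 (\<lambda>u. avg (Pset n T - S0) (\<lambda>v. g (Xv n p 0 u)))"
  proof (rule avg_cong, rule avg_cong)
    fix u v
    have "Xv n p 0 (mrg S0 u v) = Xv n p 0 u"
      unfolding Xv_def mrg_def S0_def by (rule restrict_ext) auto
    thus "g (Xv n p 0 (mrg S0 u v)) = g (Xv n p 0 u)" by simp
  qed
  also have "\<dots> = avg S0 (\<lambda>u. g (Xv n p 0 u))" by (simp only: avg_const[OF fin(2)])
  also have "\<dots> = avg {1..n} g"
  proof (rule avg_bij)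
    show "card S0 = card {1..n}" unfolding S0_def by (rule card_image) (auto intro: inj_onI)
    show "bij_betw (Xv n p 0) (PiE S0 (\<lambda>_. UNIV)) (PiE {1..n} (\<lambda>_. UNIV))"
    proof (rule bij_betw_byWitness[where f'="\<lambda>x. restrict (\<lambda>q. x (fst q)) S0"])
      show "\<forall>a\<in>PiE S0 (\<lambda>_. UNIV). restrict (\<lambda>q. Xv n p 0 a (fst q)) S0 = a"
        by (auto simp: Xv_def S0_def fun_eq_iff PiE_def extensional_def)
      show "\<forall>a'\<in>PiE {1..n} (\<lambda>_. UNIV). Xv n p 0 (restrict (\<lambda>q. a' (fst q)) S0) = a'"
        by (auto simp: Xv_def S0_def fun_eq_iff PiE_def extensional_def)
    qed (auto simp: Xv_def)
  qed
  finally show ?thesis .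
qed



lemma peq:
  assumes H: "hyps n T p b s" and j: "j \<in> {1..n}" "b j \<noteq> 0" and d: "d < 2^s" "d' < 2^s"
  shows "p d j = p d' j \<longleftrightarrow> unset_bit (b j - 1) d = unset_bit (b j - 1) d'"
proof -
  let ?i = "b j - 1"
  have pr: "\<forall>c<2^s. p (unset_bit ?i c) j = p c j" and inj: "inj_on (\<lambda>c. p c j) {c. c < 2^s \<and> \<not> bit c ?i}"
    using H j unfolding hyps_def by auto
  have U: "unset_bit ?i e \<in> {c. c < 2^s \<and> \<not> bit c ?i}" if "e < 2^s" for e :: nat
    using ule[of ?i e] that by (auto simp: bit_unset_bit_iff)
  have "p d j = p d' j \<longleftrightarrow> p (unset_bit ?i d) j = p (unset_bit ?i d') j" using pr d by simp
  also have "\<dots> \<longleftrightarrow> unset_bit ?i d = unset_bit ?i d'"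
    using inj_on_eq_iff[OF inj U[OF d(1)] U[OF d(2)]] .
  finally show ?thesis .
qed

lemma sepW:
  assumes H: "hyps n T p b (Suc s)" and j: "j \<in> {1..n}" "b j \<noteq> Suc s" and c: "c < 2^s" "c' < 2^s"
  shows "p c j \<noteq> p (c' + 2^s) j" "p c j = p c' j \<longleftrightarrow> p (c + 2^s) j = p (c' + 2^s) j"
proof -
  have r: "c < 2^Suc s" "c' < 2^Suc s" "c + 2^s < 2^Suc s" "c' + 2^s < 2^Suc s" using c by auto
  have "p c j \<noteq> p (c' + 2^s) j \<and> (p c j = p c' j \<longleftrightarrow> p (c + 2^s) j = p (c' + 2^s) j)"
  proof (cases "b j = 0")
    case True
    hence inj: "inj_on (\<lambda>c. p c j) {..<(2::nat)^Suc s}" using H j unfolding hyps_def by auto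
    show ?thesis using inj_on_eq_iff[OF inj] r c by (auto simp del: power_Suc)
  next
    case False
    have bs: "b j \<le> Suc s" using H j unfolding hyps_def by auto
    hence ne: "b j - 1 \<noteq> s" using j False by auto
    note pe = peq[OF H j(1) False]
    have u2: "unset_bit (b j - 1) (e + 2^s) = unset_bit (b j - 1) e + 2^s" if "e < 2^s" for e :: nat
      using ub2[OF ne that] .
    have "unset_bit (b j - 1) c < 2^s" using ule[of "b j - 1" c] c by linarith
    thus ?thesis using pe[OF r(1) r(4)] pe[OF r(1) r(2)] pe[OF r(3) r(4)] u2[OF c(1)] u2[OF c(2)]
      by auto
  qed
  thus "p c j \<noteq> p (c' + 2^s) j" "p c j = p c' j \<longleftrightarrow> p (c + 2^s) j = p (c' + 2^s) j" by auto
qed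

lemma hyps_down:
  assumes H: "hyps n T p b (Suc s)"
  shows "hyps n T p (\<lambda>j. if b j = Suc s then 0 else b j) s"
proof -
  have c1: "\<forall>c<(2::nat)^s. \<forall>j\<in>{1..n}. p c j < T j" using H unfolding hyps_def by auto
  have c2: "(if b j = Suc s then 0 else b j) \<le> s \<and> ((if b j = Suc s then 0 else b j) = 0 \<longrightarrow> inj_on (\<lambda>c. p c j) {..<(2::nat)^s}) \<and>
       ((if b j = Suc s then 0 else b j) \<noteq> 0 \<longrightarrow> (\<forall>c<2^s. p (unset_bit ((if b j = Suc s then 0 else b j) - 1) c) j = p c j) \<and>
           inj_on (\<lambda>c. p c j) {c. c < 2^s \<and> \<not> bit c ((if b j = Suc s then 0 else b j) - 1)})" if j: "j \<in> {1..n}" for j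
  proof -
  have A: "b j \<le> Suc s" "b j = 0 \<longrightarrow> inj_on (\<lambda>c. p c j) {..<(2::nat)^Suc s}"
    "b j \<noteq> 0 \<longrightarrow> (\<forall>c<2^Suc s. p (unset_bit (b j - 1) c) j = p c j) \<and>
           inj_on (\<lambda>c. p c j) {c. c < 2^Suc s \<and> \<not> bit c (b j - 1)}" using H j unfolding hyps_def by auto
  show ?thesis
  proof (cases "b j = Suc s")
    case True
    hence "inj_on (\<lambda>c. p c j) {c. c < 2^Suc s \<and> \<not> bit c s}" using A(3) by auto
    moreover have "{..<(2::nat)^s} \<subseteq> {c. c < 2^Suc s \<and> \<not> bit c s}" using nb by auto
    ultimately have "inj_on (\<lambda>c. p c j) {..<(2::nat)^s}" by (rule inj_on_subset)
    thus ?thesis using True by simp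
  next
    case False
    show ?thesis
    proof (cases "b j = 0")
      case True
      hence "inj_on (\<lambda>c. p c j) {..<(2::nat)^Suc s}" using A(2) by auto
      hence "inj_on (\<lambda>c. p c j) {..<(2::nat)^s}" by (rule inj_on_subset) auto
      thus ?thesis using True by simp
    next
      case nz: False
      have "inj_on (\<lambda>c. p c j) {c. c < 2^Suc s \<and> \<not> bit c (b j - 1)}" using A(3) nz by auto
      hence "inj_on (\<lambda>c. p c j) {c. c < 2 ^ s \<and> \<not> bit c (b j - 1)}"
        by (rule inj_on_subset) auto
      thus ?thesis using A False nz by auto
    qed
  qed
  qed
  show ?thesis unfolding hyps_def using c1 c2 by blast
qed



lemma main:
  assumes "hyps n T p b s"
  shows "(avg {1..n} g)^(2^s) \<le> avg (Pset n T) (\<lambda>Y. \<Prod>c<2^s. g (Xv n p c Y))"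
  using assms
proof (induction s arbitrary: b)
  case 0
  have "\<forall>j\<in>{1..n}. p 0 j < T j" using 0 unfolding hyps_def by auto
  thus ?case using base[of n p T g] by simp
next
  case (Suc s)
  note H = Suc.prems
  define P where "P = Pset n T"
  define G1 where "G1 Y = (\<Prod>c<2^s. g (Xv n p c Y))" for Y
  define G2 where "G2 Y = (\<Prod>c<2^s. g (Xv n p (c + 2^s) Y))" for Y
  have IH: "(avg {1..n} g)^(2^s) \<le> avg P G1"
    using Suc.IH[OF hyps_down[OF H]] unfolding G1_def P_def by simp
  have pT: "p c j < T j" if "c < 2^Suc s" "j\<in>{1..n}" for c j using H that unfolding hyps_def by auto
  define S where "S = {(j, p c j) | j c. j \<in> {1..n} \<and> b j = Suc s \<and> c < (2::nat)^s}"
  define A where "A = {(j, p c j) | j c. j \<in> {1..n} \<and> b j \<noteq> Suc s \<and> c < (2::nat)^s}"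
  define \<sigma> where "\<sigma> j r = (if \<exists>c<(2::nat)^s. p c j = r then p ((SOME c. c<(2::nat)^s \<and> p c j = r) + 2^s) j
      else if \<exists>c<(2::nat)^s. p (c+2^s) j = r then p (SOME c. c<(2::nat)^s \<and> p (c+2^s) j = r) j else r)" for j r
  define \<pi> where "\<pi> x = (if fst x \<in> {1..n} \<and> b (fst x) \<noteq> Suc s then (fst x, \<sigma> (fst x) (snd x)) else x)" for x
  have \<sigma>1: "\<sigma> j (p c j) = p (c + 2^s) j" if "j\<in>{1..n}" "b j \<noteq> Suc s" "c < 2^s" for j c
  proof -
    have ex: "\<exists>c'. c'<(2::nat)^s \<and> p c' j = p c j" using that by auto
    define c0 where "c0 = (SOME c'. c'<(2::nat)^s \<and> p c' j = p c j)"
    have c0: "c0 < 2^s" "p c0 j = p c j" using someI_ex[OF ex] unfolding c0_def by auto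
    have "\<sigma> j (p c j) = p (c0 + 2^s) j" unfolding \<sigma>_def c0_def using that by auto
    also have "\<dots> = p (c + 2^s) j" using sepW(2)[OF H that(1,2) c0(1) that(3)] c0(2) by simp
    finally show ?thesis .
  qed
  have \<sigma>2: "\<sigma> j (p (c + 2^s) j) = p c j" if "j\<in>{1..n}" "b j \<noteq> Suc s" "c < 2^s" for j c
  proof -
    have nex: "\<not> (\<exists>c'<(2::nat)^s. p c' j = p (c + 2^s) j)" using sepW(1)[OF H that(1,2) _ that(3)] by auto
    have ex: "\<exists>c'. c'<(2::nat)^s \<and> p (c'+2^s) j = p (c+2^s) j" using that by auto
    define c0 where "c0 = (SOME c'. c'<(2::nat)^s \<and> p (c'+2^s) j = p (c+2^s) j)"
    have c0: "c0 < 2^s" "p (c0+2^s) j = p (c+2^s) j" using someI_ex[OF ex] unfolding c0_def by auto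
    have "\<sigma> j (p (c+2^s) j) = p c0 j" unfolding \<sigma>_def c0_def using that nex by auto
    also have "\<dots> = p c j" using sepW(2)[OF H that(1,2) c0(1) that(3)] c0(2) by simp
    finally show ?thesis .
  qed
  have \<sigma>0: "\<sigma> j r = r" if "\<not> (\<exists>c<(2::nat)^s. p c j = r)" "\<not> (\<exists>c<(2::nat)^s. p (c+2^s) j = r)" for j r
    using that unfolding \<sigma>_def by auto
  have \<sigma>\<sigma>: "\<sigma> j (\<sigma> j r) = r" if "j\<in>{1..n}" "b j \<noteq> Suc s" for j r
  proof (cases "\<exists>c<(2::nat)^s. p c j = r")
    case True
    then obtain c where "c < 2^s" "r = p c j" by auto
    thus ?thesis using \<sigma>1 \<sigma>2 that by simp
  next
    case F1: False
    show ?thesis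
    proof (cases "\<exists>c<(2::nat)^s. p (c+2^s) j = r")
      case True
      then obtain c where "c < 2^s" "r = p (c+2^s) j" by auto
      thus ?thesis using \<sigma>1 \<sigma>2 that by simp
    next
      case False
      thus ?thesis using \<sigma>0[OF F1 False] by simp
    qed
  qed
  have \<sigma>T: "\<sigma> j r < T j" if "j\<in>{1..n}" "b j \<noteq> Suc s" "r < T j" for j r
  proof (cases "\<exists>c<(2::nat)^s. p c j = r")
    case True
    then obtain c where "c < 2^s" "r = p c j" by auto
    thus ?thesis using \<sigma>1 that pT[of "c + 2^s" j] by simp
  next
    case F1: False
    show ?thesis
    proof (cases "\<exists>c<(2::nat)^s. p (c+2^s) j = r")
      case True
      then obtain c where "c < 2^s" "r = p (c+2^s) j" by auto
      thus ?thesis using \<sigma>2 that pT[of c j] by simp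
    next
      case False
      thus ?thesis using \<sigma>0[OF F1 False] that by simp
    qed
  qed
  have \<pi>\<pi>: "\<pi> (\<pi> x) = x" for x
    by (cases x) (auto simp: \<pi>_def \<sigma>\<sigma>)
  have \<pi>P: "\<pi> x \<in> P" if "x \<in> P" for x
    using that \<sigma>T by (cases x) (auto simp: \<pi>_def P_def Pset_def)
  have \<pi>S: "\<pi> x = x" if "x \<in> S" for x
    using that unfolding S_def \<pi>_def by auto
  have \<pi>PS: "\<pi> x \<in> P - S" if "x \<in> P - S" for x
  proof -
    have "\<pi> x \<in> P" using \<pi>P that by auto
    moreover have "\<pi> x \<notin> S"
    proof
      assume "\<pi> x \<in> S"
      then have b: "b (fst (\<pi> x)) = Suc s" unfolding S_def by auto
      have "fst (\<pi> x) = fst x" unfolding \<pi>_def by auto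
      hence "\<pi> x = x" using b unfolding \<pi>_def by auto
      thus False using that \<open>\<pi> x \<in> S\<close> by auto
    qed
    ultimately show ?thesis by auto
  qed
  have pb: "bij_betw \<pi> (P - S) (P - S)"
    by (rule bij_betw_byWitness[where f'=\<pi>]) (use \<pi>\<pi> \<pi>PS in auto)
  have sym: "G2 Y = G1 (Y \<circ> \<pi>)" for Y
    unfolding G1_def G2_def
  proof (rule prod.cong[OF refl])
    fix c assume c: "c \<in> {..<(2::nat)^s}"
    have "Xv n p (c + 2^s) Y = Xv n p c (Y \<circ> \<pi>)"
      unfolding Xv_def
    proof (rule restrict_ext)
      fix j assume j: "j \<in> {1..n}"
      show "Y (j, p (c + 2 ^ s) j) = (Y \<circ> \<pi>) (j, p c j)"
      proof (cases "b j = Suc s")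
        case True
        have hh: "\<forall>c<2^Suc s. p (unset_bit (b j - 1) c) j = p c j"
          using H j True unfolding hyps_def by (metis Suc_neq_Zero)
        have "c + 2^s < 2^Suc s" using c by simp
        hence "p (unset_bit (b j - 1) (c + 2^s)) j = p (c + 2^s) j"
          using hh by blast
        hence "p (c + 2^s) j = p c j" using True ub1[of c s] c by simp
        thus ?thesis using True by (simp add: \<pi>_def)
      next
        case False
        thus ?thesis using \<sigma>1[OF j False] c j by (simp add: \<pi>_def)
      qed
    qed
    thus "g (Xv n p (c + 2 ^ s) Y) = g (Xv n p c (Y \<circ> \<pi>))" by simp
  qed
  have SP: "S \<subseteq> P" and AP: "A \<subseteq> P" unfolding S_def A_def P_def Pset_def using pT by force+
  have SA: "S \<inter> A = {}" unfolding S_def A_def by auto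
  have d1: "G1 Y = G1 Y'" if "\<forall>x\<in>S \<union> A. Y x = Y' x" for Y Y'
    unfolding G1_def
  proof (rule prod.cong[OF refl])
    fix c assume c: "c \<in> {..<(2::nat)^s}"
    have "Xv n p c Y = Xv n p c Y'" unfolding Xv_def
    proof (rule restrict_ext)
      fix j assume j: "j \<in> {1..n}"
      have "(j, p c j) \<in> S \<union> A" using j c unfolding S_def A_def by auto
      thus "Y (j, p c j) = Y' (j, p c j)" using that by auto
    qed
    thus "g (Xv n p c Y) = g (Xv n p c Y')" by simp
  qed
  have d2: "G2 Y = G2 Y'" if "\<forall>x\<in>P - A. Y x = Y' x" for Y Y'
    unfolding G2_def
  proof (rule prod.cong[OF refl])
    fix c assume c: "c \<in> {..<(2::nat)^s}"
    have "Xv n p (c + 2^s) Y = Xv n p (c + 2^s) Y'" unfolding Xv_def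
    proof (rule restrict_ext)
      fix j assume j: "j \<in> {1..n}"
      have "(j, p (c + 2^s) j) \<in> P" using j c pT[of "c + 2^s" j] unfolding P_def Pset_def by auto
      moreover have "(j, p (c + 2^s) j) \<notin> A"
      proof
        assume "(j, p (c + 2^s) j) \<in> A"
        then obtain c' where "b j \<noteq> Suc s" "c' < 2^s" "p (c + 2^s) j = p c' j" unfolding A_def by auto
        thus False using sepW(1)[OF H j _ _] c by (metis lessThan_iff)
      qed
      ultimately show "Y (j, p (c + 2^s) j) = Y' (j, p (c + 2^s) j)" using that by auto
    qed
    thus "g (Xv n p (c + 2^s) Y) = g (Xv n p (c + 2^s) Y')" by simp
  qed
  have K: "(avg P G1)^2 \<le> avg P (\<lambda>Y. G1 Y * G2 Y)"
    apply (rule key[where P=P and S=S and A=A and \<pi>=\<pi>])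
    apply (simp add: P_def finite_Pset)
    apply (rule SP)
    apply (rule AP)
    apply (rule SA)
    apply (erule d1)
    apply (erule d2)
    apply (rule pb)
    apply (erule \<pi>S)
    apply (rule sym)
    done
  have pe: "avg P (\<lambda>Y. \<Prod>c<2^Suc s. g (Xv n p c Y)) = avg P (\<lambda>Y. G1 Y * G2 Y)"
    unfolding G1_def G2_def by (simp only: prod_split)
  have "(avg {1..n} g ^ 2 ^ s)^2 \<le> (avg P G1)^2"
  proof (cases s)
    case 0
    have "\<forall>j\<in>{1..n}. p 0 j < T j" using pT by auto
    hence "avg P G1 = avg {1..n} g" using base[of n p T g] 0 unfolding G1_def P_def by simp
    thus ?thesis using 0 by simp
  next
    case (Suc s')
    have "0 \<le> avg {1..n} g ^ 2 ^ s" using Suc by (simp add: zero_le_even_power)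
    thus ?thesis by (rule power_mono[OF IH])
  qed
  hence "avg {1..n} g ^ 2 ^ Suc s \<le> (avg P G1)^2" by (simp add: power_mult[symmetric] mult.commute)
  thus ?case using K pe unfolding P_def by simp
qed



lemma sgn1_neq: "sgn1 (a \<noteq> b) = sgn1 a * sgn1 b"
  by (cases a; cases b) (simp_all add: sgn1_def)

lemma sgn1_xor: "finite A \<Longrightarrow> sgn1 (xor_set A P) = (\<Prod>a\<in>A. sgn1 (P a))"
proof -
  assume fA: "finite A"
  have "(\<Prod>a\<in>A. sgn1 (P a)) = (\<Prod>a\<in>A. if P a then -1 else 1)" by (simp add: sgn1_def)
  also have "\<dots> = (-1) ^ card (A \<inter> {x. P x})" using fA by (simp add: prod.If_cases)
  also have "A \<inter> {x. P x} = {a\<in>A. P a}" by auto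
  finally show ?thesis unfolding xor_set_def sgn1_def by (simp add: minus_one_power_iff)
qed

lemma set_bit_lt: "i < s \<Longrightarrow> \<not> bit c i \<Longrightarrow> (c::nat) < 2^s \<Longrightarrow> c + 2^i < 2^s"
proof -
  assume a: "i < s" "\<not> bit c i" "c < 2^s"
  have d: "c + 2^i = or c (2^i)"
    by (rule disjunctive_add) (use a(2) in \<open>auto simp: bit_exp_iff\<close>)
  have "take_bit s (or c (2^i)) = or c (2^i)"
    using a by (simp add: take_bit_or take_bit_nat_eq_self)
  thus ?thesis unfolding d by (metis take_bit_nat_eq_self_iff)
qed

lemma unset_add: "\<not> bit c i \<Longrightarrow> unset_bit i ((c::nat) + 2^i) = c"
proof -
  assume a: "\<not> bit c i"
  have d: "c + 2^i = or c (2^i)"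
    by (rule disjunctive_add) (use a in \<open>auto simp: bit_exp_iff\<close>)
  show ?thesis unfolding d by (rule bit_eqI) (use a in \<open>auto simp: bit_or_iff bit_unset_bit_iff bit_exp_iff\<close>)
qed

lemma pair_prod:
  fixes q :: "nat \<Rightarrow> real"
  assumes i: "i < s" and pr: "\<And>c. c < 2^s \<Longrightarrow> q (unset_bit i c) = q c" and sq: "\<And>c. q c * q c = 1"
  shows "(\<Prod>c<2^s. q c) = 1"
proof -
  define L where "L = {c::nat. c < 2^s \<and> \<not> bit c i}"
  define H where "H = {c::nat. c < 2^s \<and> bit c i}"
  have U: "{..<2^s} = L \<union> H" "L \<inter> H = {}" unfolding L_def H_def by auto
  have bij: "bij_betw (\<lambda>c. c + 2^i) L H"
  proof (rule bij_betw_byWitness[where f'="unset_bit i"])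
    show "\<forall>a\<in>L. unset_bit i (a + 2 ^ i) = a" unfolding L_def using unset_add by auto
    show "\<forall>a'\<in>H. unset_bit i a' + 2 ^ i = a'"
    proof
      fix a assume "a \<in> H"
      hence b: "bit a i" unfolding H_def by auto
      have "\<not> bit (unset_bit i a) i" by (simp add: bit_unset_bit_iff)
      hence "or (unset_bit i a) (2^i) = unset_bit i a + 2^i"
        by (intro disjunctive_add[symmetric]) (auto simp: bit_exp_iff)
      moreover have "or (unset_bit i a) (2^i) = a"
        by (rule bit_eqI) (use b in \<open>auto simp: bit_or_iff bit_unset_bit_iff bit_exp_iff\<close>)
      ultimately show "unset_bit i a + 2 ^ i = a" by simp
    qed
    show "(\<lambda>c. c + 2 ^ i) ` L \<subseteq> H"
    proof
      fix x assume "x \<in> (\<lambda>c. c + 2 ^ i) ` L"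
      then obtain c where c: "c \<in> L" "x = c + 2^i" by auto
      have "bit (unset_bit i (c + 2^i)) i = False" by (simp add: bit_unset_bit_iff)
      have "bit (c + 2^i) i"
        using c(1) unfolding L_def by (subst disjunctive_add) (auto simp: bit_exp_iff bit_or_iff)
      thus "x \<in> H" using c set_bit_lt[OF i] unfolding L_def H_def by auto
    qed
    show "unset_bit i ` H \<subseteq> L" unfolding H_def L_def using ule
      by (auto simp: bit_unset_bit_iff intro: le_less_trans)
  qed
  have "(\<Prod>c\<in>H. q c) = (\<Prod>c\<in>L. q (c + 2^i))" using prod.reindex_bij_betw[OF bij, of q] by simp
  also have "\<dots> = (\<Prod>c\<in>L. q c)"
  proof (rule prod.cong[OF refl])
    fix c assume c: "c \<in> L"
    have "c + 2^i < 2^s" using c set_bit_lt[OF i] unfolding L_def by auto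
    hence "q (unset_bit i (c + 2^i)) = q (c + 2^i)" by (rule pr)
    thus "q (c + 2^i) = q c" using unset_add c unfolding L_def by auto
  qed
  finally have "(\<Prod>c<2^s. q c) = (\<Prod>c\<in>L. q c) * (\<Prod>c\<in>L. q c)"
    unfolding U(1) by (subst prod.union_disjoint) (auto simp: U(2) L_def H_def)
  also have "\<dots> = (\<Prod>c\<in>L. q c * q c)" by (simp add: prod.distrib)
  also have "\<dots> = 1" by (simp add: sq)
  finally show ?thesis .
qed



lemma bias_F2vec: "bias (F2vec n) h = avg {1..n} (\<lambda>x. sgn1 (h x))"
  unfolding bias_def avg_def F2vec_def by (simp add: card_PiE_bool)

definition psi :: "nat \<Rightarrow> (nat \<Rightarrow> nat) \<Rightarrow> (nat \<times> nat \<Rightarrow> bool) \<Rightarrow> nat \<Rightarrow> nat \<Rightarrow> bool" where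
  "psi n T Y = (\<lambda>j\<in>{1..n}. \<lambda>r\<in>{0..<T j}. Y (j, r))"

lemma psi_bij: "bij_betw (psi n T) (PiE (Pset n T) (\<lambda>_. UNIV)) (Bits n T)"
  unfolding Bits_def
proof (rule bij_betw_byWitness[where f'="\<lambda>y. restrict (\<lambda>x. y (fst x) (snd x)) (Pset n T)"])
  show "\<forall>a\<in>PiE (Pset n T) (\<lambda>_. UNIV). restrict (\<lambda>x. psi n T a (fst x) (snd x)) (Pset n T) = a"
    by (auto simp: psi_def Pset_def PiE_def extensional_def fun_eq_iff)
  show "\<forall>a'\<in>PiE {1..n} (\<lambda>j. PiE {0..<T j} (\<lambda>_. UNIV)). psi n T (restrict (\<lambda>x. a' (fst x) (snd x)) (Pset n T)) = a'"
    by (auto simp: psi_def Pset_def PiE_def extensional_def fun_eq_iff)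
  show "psi n T ` PiE (Pset n T) (\<lambda>_. UNIV) \<subseteq> PiE {1..n} (\<lambda>j. PiE {0..<T j} (\<lambda>_. UNIV))"
    by (auto simp: psi_def)
  show "(\<lambda>y. restrict (\<lambda>x. y (fst x) (snd x)) (Pset n T)) ` PiE {1..n} (\<lambda>j. PiE {0..<T j} (\<lambda>_. UNIV)) \<subseteq> PiE (Pset n T) (\<lambda>_. UNIV)"
    by auto
qed

lemma bias_Bits: "bias (Bits n T) H = avg (Pset n T) (\<lambda>Y. sgn1 (H (psi n T Y)))"
proof -
  have c: "card (Bits n T) = card (PiE (Pset n T) (\<lambda>_. UNIV::bool set))"
    using bij_betw_same_card[OF psi_bij] by simp
  show ?thesis unfolding bias_def avg_def c card_PiE_bool[OF finite_Pset]
    using sum.reindex_bij_betw[OF psi_bij, of "\<lambda>y. sgn1 (H y)"] by simp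
qed

lemma tau_unset:
  assumes i: "i \<in> {1..s}"
  shows "tau s M c = tau s M (unset_bit (i - 1) c) + (if bit c (i - 1) then M i else 0)"
proof -
  let ?f = "\<lambda>d i'. if bit d (i' - 1) then M i' else (0::nat)"
  have "tau s M c = ?f c i + sum (?f c) ({1..s} - {i})"
    unfolding tau_def using i by (subst sum.remove[of _ i]) auto
  moreover have "tau s M (unset_bit (i - 1) c) = ?f (unset_bit (i - 1) c) i + sum (?f (unset_bit (i - 1) c)) ({1..s} - {i})"
    unfolding tau_def using i by (subst sum.remove[of _ i]) auto
  moreover have "sum (?f (unset_bit (i - 1) c)) ({1..s} - {i}) = sum (?f c) ({1..s} - {i})"
  proof (rule sum.cong[OF refl])
    fix i' assume "i' \<in> {1..s} - {i}"
    hence "i' - 1 \<noteq> i - 1" using i by auto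
    thus "?f (unset_bit (i - 1) c) i' = ?f c i'" by (simp add: bit_unset_bit_iff)
  qed
  ultimately show ?thesis by (simp add: bit_unset_bit_iff)
qed

lemma concrete_hyps:
  fixes n k s t :: nat and T q l :: "nat \<Rightarrow> nat"
  assumes T_pos: "\<forall>j\<in>{1..n}. T j > 0"
    and l_first: "l 1 = 0"
    and l_last: "l (Suc s) = k"
    and k_le: "k \<le> n"
    and G1: "\<forall>j\<in>{k<..n}. inj_on (\<lambda>c. tau s (Mblk q l T) c mod T j) {0..<2^s}"
    and G2: "\<forall>i\<in>{1..s}. \<forall>j\<in>{l i<..l (Suc i)}.
               inj_on (\<lambda>c. tau s (Mblk q l T) c mod T j) {c\<in>{0..<2^s}. \<not> bit c (i - 1)}"
  defines "p \<equiv> \<lambda>c j. (t + tau s (Mblk q l T) c) mod T j"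
    and "b \<equiv> \<lambda>j. if j \<le> k then (LEAST i. j \<le> l (Suc i)) else 0"
  shows "hyps n T p b s \<and> (\<forall>j\<in>{1..n}. j \<le> k \<longrightarrow> b j \<noteq> 0)"
proof -
  let ?M = "Mblk q l T"
  have injt: "inj_on (\<lambda>c. p c j) A" if "inj_on (\<lambda>c. tau s ?M c mod T j) A" for A j
    using that unfolding inj_on_def p_def
    by (metis cong_add_lcancel_nat cong_def)
  have blk: "b j \<in> {1..s} \<and> j \<in> {l (b j)<..l (Suc (b j))}" if j: "j \<in> {1..n}" "j \<le> k" for j
  proof -
    define i where "i = (LEAST i. j \<le> l (Suc i))"
    have bi: "b j = i" using j unfolding b_def i_def by simp
    have ex: "j \<le> l (Suc s)" using j l_last by simp
    have i1: "j \<le> l (Suc i)" unfolding i_def by (rule LeastI[of _ s]) (rule ex)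
    have i2: "i \<le> s" unfolding i_def by (rule Least_le) (rule ex)
    have i3: "i \<noteq> 0"
    proof
      assume "i = 0"
      with i1 l_first j show False by (simp add: One_nat_def)
    qed
    have "\<not> j \<le> l (Suc (i - 1))" unfolding i_def
      by (rule not_less_Least) (use i3 in \<open>simp add: i_def[symmetric]\<close>)
    hence i4: "l i < j" using i3 by simp
    show ?thesis using bi i1 i2 i3 i4 by auto
  qed
  have c1: "\<forall>c<(2::nat)^s. \<forall>j\<in>{1..n}. p c j < T j" using T_pos unfolding p_def by auto
  have c2: "b j \<le> s \<and> (b j = 0 \<longrightarrow> inj_on (\<lambda>c. p c j) {..<(2::nat)^s}) \<and>
       (b j \<noteq> 0 \<longrightarrow> (\<forall>c<2^s. p (unset_bit (b j - 1) c) j = p c j) \<and>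
           inj_on (\<lambda>c. p c j) {c. c < 2^s \<and> \<not> bit c (b j - 1)})" if j: "j \<in> {1..n}" for j
  proof (cases "j \<le> k")
    case True
    note B = blk[OF j True]
    define i where "i = b j"
    have i: "i \<in> {1..s}" "j \<in> {l i<..l (Suc i)}" using B unfolding i_def by auto
    have dv: "T j dvd ?M i"
    proof -
      have "T j \<in> T ` {l i + 1..l (Suc i)}" using i(2) by auto
      hence "T j dvd Lcm (T ` {l i + 1..l (Suc i)})" by (rule dvd_Lcm)
      thus ?thesis unfolding Mblk_def by simp
    qed
    have pair: "p (unset_bit (i - 1) c) j = p c j" for c
    proof -
      obtain m where m: "?M i = T j * m" using dv by blast
      have "tau s ?M c = tau s ?M (unset_bit (i - 1) c) + (if bit c (i - 1) then ?M i else 0)"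
        by (rule tau_unset[OF i(1)])
      hence "t + tau s ?M c = (t + tau s ?M (unset_bit (i - 1) c)) + (if bit c (i - 1) then m else 0) * T j"
        using m by (simp add: mult.commute)
      thus ?thesis unfolding p_def by (simp only: mod_mult_self1)
    qed
    have inj: "inj_on (\<lambda>c. p c j) {c. c < 2^s \<and> \<not> bit c (i - 1)}"
    proof -
      have "inj_on (\<lambda>c. tau s ?M c mod T j) {c\<in>{0..<2^s}. \<not> bit c (i - 1)}" using G2 i by blast
      moreover have "{c\<in>{0..<2^s}. \<not> bit c (i - 1)} = {c. c < (2::nat)^s \<and> \<not> bit c (i - 1)}" by auto
      ultimately show ?thesis using injt by simp
    qed
    show ?thesis using pair inj i unfolding i_def by auto
  next
    case False
    hence b0: "b j = 0" unfolding b_def by simp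
    have "j \<in> {k<..n}" using False j by auto
    hence "inj_on (\<lambda>c. tau s ?M c mod T j) {0..<2^s}" using G1 by blast
    hence "inj_on (\<lambda>c. p c j) {..<(2::nat)^s}" using injt by (simp add: atLeast0LessThan)
    thus ?thesis using b0 by simp
  qed
  have c3: "\<forall>j\<in>{1..n}. j \<le> k \<longrightarrow> b j \<noteq> 0"
  proof (intro ballI impI)
    fix j assume "j \<in> {1..n}" "j \<le> k"
    thus "b j \<noteq> 0" using blk[of j] by auto
  qed
  show ?thesis unfolding hyps_def using c1 c2 c3 by blast
qed



theorem corollary1:
  fixes n k s t :: nat
    and f :: "(nat \<Rightarrow> bool) \<Rightarrow> bool"
    and T q l :: "nat \<Rightarrow> nat"
  assumes T_pos: "\<forall>j\<in>{1..n}. T j > 0"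
    and s_pos: "s \<ge> 1"
    and l_first: "l 1 = 0"
    and l_mono: "\<forall>i\<in>{1..s}. l i < l (Suc i)"
    and l_last: "l (Suc s) = k"
    and k_le: "k \<le> n"
    and q_pos: "\<forall>i\<in>{1..s}. q i > 0"
    and G1: "\<forall>j\<in>{k<..n}. inj_on (\<lambda>c. tau s (Mblk q l T) c mod T j) {0..<2^s}"
    and G2: "\<forall>i\<in>{1..s}. \<forall>j\<in>{l i<..l (Suc i)}.
               inj_on (\<lambda>c. tau s (Mblk q l T) c mod T j) {c\<in>{0..<2^s}. \<not> bit c (i - 1)}"
  shows "bias (Bits n T) (PC n f T s (Mblk q l T) t)
         \<ge> Max ((\<lambda>\<alpha>. (bias (F2vec n) (\<lambda>x. f x \<noteq> lin_fun n \<alpha> x)) ^ (2^s)) ` Vk n k)"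
proof -
  define M where "M = Mblk q l T"
  define p where "p = (\<lambda>c j. (t + tau s M c) mod T j)"
  define b where "b = (\<lambda>j. if j \<le> k then (LEAST i. j \<le> l (Suc i)) else (0::nat))"
  have CH: "hyps n T p b s \<and> (\<forall>j\<in>{1..n}. j \<le> k \<longrightarrow> b j \<noteq> 0)"
    unfolding p_def b_def M_def by (rule concrete_hyps[OF T_pos l_first l_last k_le G1 G2])
  hence H: "hyps n T p b s" and nz: "\<forall>j\<in>{1..n}. j \<le> k \<longrightarrow> b j \<noteq> 0" by auto
  have PCeq: "sgn1 (PC n f T s M t (psi n T Y)) = (\<Prod>c<2^s. sgn1 (f (Xv n p c Y)))" for Y
  proof -
    have "restrict (\<lambda>j. psi n T Y j ((t + tau s M c) mod T j)) {1..n} = Xv n p c Y" for c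
      unfolding Xv_def p_def psi_def using T_pos by (intro restrict_ext) auto
    then show ?thesis unfolding PC_def by (simp add: sgn1_xor atLeast0LessThan)
  qed
  have lin1: "(\<Prod>c<2^s. sgn1 (lin_fun n \<alpha> (Xv n p c Y))) = 1" if \<alpha>: "\<alpha> \<in> Vk n k" for \<alpha> Y
  proof -
    have "(\<Prod>c<2^s. sgn1 (lin_fun n \<alpha> (Xv n p c Y))) = (\<Prod>c<2^s. \<Prod>j\<in>{1..n}. sgn1 (\<alpha> j \<and> Y (j, p c j)))"
    proof (rule prod.cong[OF refl])
      fix c
      show "sgn1 (lin_fun n \<alpha> (Xv n p c Y)) = (\<Prod>j\<in>{1..n}. sgn1 (\<alpha> j \<and> Y (j, p c j)))"
        unfolding lin_fun_def sgn1_xor[OF finite_atLeastAtMost] by (rule prod.cong) (auto simp: Xv_def)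
    qed
    also have "\<dots> = (\<Prod>j\<in>{1..n}. \<Prod>c<2^s. sgn1 (\<alpha> j \<and> Y (j, p c j)))" by (rule prod.swap)
    also have "\<dots> = 1"
    proof (rule prod.neutral, rule ballI)
      fix j assume j: "j \<in> {1..n}"
      show "(\<Prod>c<2^s. sgn1 (\<alpha> j \<and> Y (j, p c j))) = 1"
      proof (cases "\<alpha> j")
        case False thus ?thesis by (simp add: sgn1_def)
      next
        case True
        hence "j \<le> k" using \<alpha> j unfolding Vk_def by auto
        hence bj: "b j \<noteq> 0" using nz j by auto
        have bs: "b j \<le> s" and pr: "\<forall>c<2^s. p (unset_bit (b j - 1) c) j = p c j"
          using H j bj unfolding hyps_def by auto
        show ?thesis
          by (rule pair_prod[of "b j - 1" s]) (use bs bj pr in \<open>auto simp: sgn1_def\<close>)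
      qed
    qed
    finally show ?thesis .
  qed
  have each: "(bias (F2vec n) (\<lambda>x. f x \<noteq> lin_fun n \<alpha> x))^(2^s) \<le> bias (Bits n T) (PC n f T s M t)"
    if \<alpha>: "\<alpha> \<in> Vk n k" for \<alpha>
  proof -
    define g where "g x = sgn1 (f x \<noteq> lin_fun n \<alpha> x)" for x
    have "(bias (F2vec n) (\<lambda>x. f x \<noteq> lin_fun n \<alpha> x))^(2^s) = (avg {1..n} g)^(2^s)"
      unfolding bias_F2vec g_def ..
    also have "\<dots> \<le> avg (Pset n T) (\<lambda>Y. \<Prod>c<2^s. g (Xv n p c Y))" by (rule main[OF H])
    also have "\<dots> = avg (Pset n T) (\<lambda>Y. sgn1 (PC n f T s M t (psi n T Y)))"
    proof (rule avg_cong)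
      fix Y :: "nat \<times> nat \<Rightarrow> bool"
      have "(\<Prod>c<2^s. g (Xv n p c Y)) = (\<Prod>c<2^s. sgn1 (f (Xv n p c Y))) * (\<Prod>c<2^s. sgn1 (lin_fun n \<alpha> (Xv n p c Y)))"
        unfolding g_def sgn1_neq by (rule prod.distrib)
      thus "(\<Prod>c<2^s. g (Xv n p c Y)) = sgn1 (PC n f T s M t (psi n T Y))"
        using lin1[OF \<alpha>] PCeq by simp
    qed
    also have "\<dots> = bias (Bits n T) (PC n f T s M t)" by (rule bias_Bits[symmetric])
    finally show ?thesis .
  qed
  have fin: "finite (Vk n k)"
  proof (rule finite_subset)
    show "Vk n k \<subseteq> F2vec n" unfolding Vk_def by auto
    show "finite (F2vec n)" unfolding F2vec_def by (rule finite_PiE) auto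
  qed
  have ne: "restrict (\<lambda>_. False) {1..n} \<in> Vk n k" unfolding Vk_def F2vec_def by auto
  show ?thesis unfolding M_def[symmetric] using fin ne each by (intro Max.boundedI) auto
qed

end
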